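(* Let $F$ be a finite field of characteristic $3$. Let $k\ge 0$ be an integer, $m=3k+1$, and $t$ an integer with $t^3\equiv 1\pmod m$ and $\gcd(m,t-1)=1$. Let $G=T_{3m}=\langle x,y\mid x^m=y^3=1,\ y^{-1}xy=x^t\rangle$ (of order $3m$), $FG$ its group algebra, and $H=\langle x\rangle$. Then $\dim_F Z(\Delta(G,H))=k$.
   Context: $\Delta(G,H)$ is the ideal of $FG$ generated by $\{h-1\mid h\in H\}$; $Z(R)$ denotes the center of a ring $R$. *)

theory Defs
  imports Complex_Main "HOL-Library.Function_Algebras" "HOL-Algebra.Generated_Groups"
begin

text \<open>Group algebra FG of a finite group G (HOL-Algebra) over a field of type 'f:
  elements are functions carrier G to 'f, extended by 0 outside the carrier.\<close>

definition group_alg :: "('g, 'b) monoid_scheme \<Rightarrow> ('g \<Rightarrow> 'f::field) set" where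
  "group_alg G = {f. \<forall>g. g \<notin> carrier G \<longrightarrow> f g = 0}"

definition ga_mult :: "('g, 'b) monoid_scheme \<Rightarrow> ('g \<Rightarrow> 'f::field) \<Rightarrow> ('g \<Rightarrow> 'f) \<Rightarrow> ('g \<Rightarrow> 'f)" where
  "ga_mult G f h = (\<lambda>g. if g \<in> carrier G
      then (\<Sum>a\<in>carrier G. f a * h (inv\<^bsub>G\<^esub> a \<otimes>\<^bsub>G\<^esub> g)) else 0)"

definition ga_basis :: "'g \<Rightarrow> ('g \<Rightarrow> 'f::field)" where
  "ga_basis g = (\<lambda>a. if a = g then 1 else 0)"

definition ga_ideal :: "('g, 'b) monoid_scheme \<Rightarrow> ('g \<Rightarrow> 'f::field) set \<Rightarrow> bool" where
  "ga_ideal G I \<longleftrightarrow> I \<subseteq> group_alg G \<and> (\<lambda>_. 0) \<in> I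
     \<and> (\<forall>a\<in>I. \<forall>b\<in>I. (\<lambda>g. a g + b g) \<in> I)
     \<and> (\<forall>a\<in>I. \<forall>r\<in>group_alg G. ga_mult G r a \<in> I \<and> ga_mult G a r \<in> I)"

definition Delta :: "('g, 'b) monoid_scheme \<Rightarrow> 'g set \<Rightarrow> ('g \<Rightarrow> 'f::field) set" where
  "Delta G H = \<Inter>{I. ga_ideal G I \<and> {(\<lambda>g. ga_basis h g - ga_basis \<one>\<^bsub>G\<^esub> g) | h. h \<in> H} \<subseteq> I}"

definition ga_center :: "('g, 'b) monoid_scheme \<Rightarrow> ('g \<Rightarrow> 'f::field) set \<Rightarrow> ('g \<Rightarrow> 'f) set" where
  "ga_center G R = {z\<in>R. \<forall>r\<in>R. ga_mult G z r = ga_mult G r z}"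

definition fdim :: "('g \<Rightarrow> 'f::field) set \<Rightarrow> nat" where
  "fdim S = vector_space.dim (\<lambda>(c::'f) f. (\<lambda>x. c * f x)) S"

end

theory Submission
  imports Defs
begin

locale orb3 =
  fixes P :: "'a set" and s :: "'a \<Rightarrow> 'a"
  assumes finP: "finite P" and sP: "p \<in> P \<Longrightarrow> s p \<in> P"
    and s3: "p \<in> P \<Longrightarrow> s (s (s p)) = p" and sfix: "p \<in> P \<Longrightarrow> s p \<noteq> p"
begin

definition orb :: "'a \<Rightarrow> 'a set" where "orb p = {p, s p, s (s p)}"

lemma orb_sub: "p \<in> P \<Longrightarrow> orb p \<subseteq> P" using sP by (auto simp: orb_def)

lemma self_orb: "p \<in> orb p" by (simp add: orb_def)

lemma card_orb: "p \<in> P \<Longrightarrow> card (orb p) = 3"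
proof -
  assume p: "p \<in> P"
  have a: "s p \<noteq> p" using sfix p by simp
  have b: "s (s p) \<noteq> s p" using sfix sP p by simp
  have c: "s (s p) \<noteq> p"
  proof
    assume "s (s p) = p" hence "s (s (s p)) = s p" by simp
    thus False using s3 p a by simp
  qed
  show ?thesis using a b c by (simp add: orb_def)
qed

lemma orb_eq: "p \<in> P \<Longrightarrow> q \<in> orb p \<Longrightarrow> orb q = orb p"
proof -
  assume p: "p \<in> P" and "q \<in> orb p"
  hence "q = p \<or> q = s p \<or> q = s (s p)" by (simp add: orb_def)
  moreover have "orb (s p) = orb p" unfolding orb_def s3[OF p] by auto
  moreover have "orb (s (s p)) = orb p" unfolding orb_def s3[OF p] s3[OF sP[OF p]] by auto
  ultimately show ?thesis by (elim disjE) simp_all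
qed

lemma orb_disj: "p \<in> P \<Longrightarrow> q \<in> P \<Longrightarrow> orb p \<noteq> orb q \<Longrightarrow> orb p \<inter> orb q = {}"
proof (rule ccontr)
  assume p: "p \<in> P" and q: "q \<in> P" and ne: "orb p \<noteq> orb q" and "orb p \<inter> orb q \<noteq> {}"
  then obtain r where "r \<in> orb p" "r \<in> orb q" by blast
  have "orb r = orb p" by (rule orb_eq[OF p \<open>r \<in> orb p\<close>])
  moreover have "orb r = orb q" by (rule orb_eq[OF q \<open>r \<in> orb q\<close>])
  ultimately show False using ne by simp
qed

lemma orb_disj': "A \<in> orb ` P \<Longrightarrow> B \<in> orb ` P \<Longrightarrow> A \<noteq> B \<Longrightarrow> A \<inter> B = {}"
  by (elim imageE) (simp add: orb_disj)

lemma Un_orb: "\<Union> (orb ` P) = P"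
proof
  show "\<Union> (orb ` P) \<subseteq> P" using orb_sub by auto
  show "P \<subseteq> \<Union> (orb ` P)" using self_orb by auto
qed

lemma card_P: "card P = 3 * card (orb ` P)"
proof -
  have "card P = card (\<Union> (orb ` P))" using Un_orb by simp
  also have "\<dots> = sum card (orb ` P)"
  proof (rule card_Union_disjoint)
    show "pairwise disjnt (orb ` P)"
      unfolding pairwise_def disjnt_def using orb_disj' by metis
    show "\<And>A. A \<in> orb ` P \<Longrightarrow> finite A" by (auto simp: orb_def)
  qed
  also have "\<dots> = sum (\<lambda>_. 3) (orb ` P)" by (rule sum.cong) (auto simp: card_orb)
  finally show ?thesis by simp
qed

lemma const_orb: "(\<And>p. p \<in> P \<Longrightarrow> f (s p) = f p) \<Longrightarrow> p \<in> P \<Longrightarrow> q \<in> orb p \<Longrightarrow> f q = f p"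
proof -
  assume inv: "\<And>p. p \<in> P \<Longrightarrow> f (s p) = f p" and p: "p \<in> P" and "q \<in> orb p"
  hence "q = p \<or> q = s p \<or> q = s (s p)" by (simp add: orb_def)
  moreover have "f (s p) = f p" using inv p by simp
  moreover have "f (s (s p)) = f p" using inv[OF sP[OF p]] inv[OF p] by simp
  ultimately show ?thesis by (elim disjE) simp_all
qed

lemma sum_P:
  fixes f :: "'a \<Rightarrow> 'b::comm_ring_1"
  assumes three: "(of_nat 3 :: 'b) = 0" and inv: "\<And>p. p \<in> P \<Longrightarrow> f (s p) = f p"
  shows "sum f P = 0"
proof -
  have "sum f P = sum f (\<Union> (orb ` P))" using Un_orb by simp
  also have "\<dots> = sum (sum f) (orb ` P)"
  proof (rule sum.Union_disjoint[unfolded o_def])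
    show "\<forall>A\<in>orb ` P. finite A" by (auto simp: orb_def)
    show "\<forall>A\<in>orb ` P. \<forall>B\<in>orb ` P. A \<noteq> B \<longrightarrow> A \<inter> B = {}" using orb_disj' by metis
  qed
  also have "\<dots> = 0"
  proof (rule sum.neutral, rule ballI)
    fix A assume "A \<in> orb ` P"
    then obtain p where p: "p \<in> P" and A: "A = orb p" by blast
    have "sum f A = sum (\<lambda>_. f p) A" using const_orb[of f, OF inv p] A by (intro sum.cong) auto
    also have "\<dots> = of_nat 3 * f p" using card_orb[OF p] A by simp
    finally show "sum f A = 0" using three by simp
  qed
  finally show ?thesis .
qed

end

locale galg = group G for G (structure) +
  assumes fin: "finite (carrier G)"
begin

abbreviation gm :: "('a \<Rightarrow> 'f::field) \<Rightarrow> ('a \<Rightarrow> 'f) \<Rightarrow> ('a \<Rightarrow> 'f)" where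
  "gm f h \<equiv> ga_mult G f h"

lemma gm_in: "a \<in> carrier G \<Longrightarrow> gm f h a = (\<Sum>b\<in>carrier G. f b * h (inv b \<otimes> a))"
  by (simp add: ga_mult_def)

lemma gm_out: "a \<notin> carrier G \<Longrightarrow> gm f h a = 0"
  by (simp add: ga_mult_def)

lemma gm_closed: "gm f h \<in> group_alg G"
  by (simp add: group_alg_def gm_out)

lemma ga_zero: "f \<in> group_alg G \<Longrightarrow> a \<notin> carrier G \<Longrightarrow> f a = 0"
  by (simp add: group_alg_def)

lemma cancel1[simp]: "x \<in> carrier G \<Longrightarrow> y \<in> carrier G \<Longrightarrow> x \<otimes> (inv x \<otimes> y) = y"
  by (simp add: m_assoc[symmetric])
lemma cancel2[simp]: "x \<in> carrier G \<Longrightarrow> y \<in> carrier G \<Longrightarrow> inv x \<otimes> (x \<otimes> y) = y"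
  by (simp add: m_assoc[symmetric])

lemma reindex_l: "c \<in> carrier G \<Longrightarrow> (\<Sum>b\<in>carrier G. F b) = (\<Sum>d\<in>carrier G. F (c \<otimes> d))"
  by (rule sum.reindex_bij_witness[where i = "\<lambda>d. c \<otimes> d" and j = "\<lambda>b. inv c \<otimes> b"])
     (simp_all add: m_assoc)

lemma reindex_inv: "a \<in> carrier G \<Longrightarrow> (\<Sum>b\<in>carrier G. F b) = (\<Sum>c\<in>carrier G. F (a \<otimes> inv c))"
  by (rule sum.reindex_bij_witness[where i = "\<lambda>c. a \<otimes> inv c" and j = "\<lambda>b. inv b \<otimes> a"])
     (simp_all add: m_assoc inv_mult_group)

lemma gm_assoc: "gm (gm f g) h = gm f (gm g h)"
proof
  fix a
  show "gm (gm f g) h a = gm f (gm g h) a"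
  proof (cases "a \<in> carrier G")
    case False then show ?thesis by (simp add: gm_out)
  next
    case a: True
    have "gm (gm f g) h a = (\<Sum>b\<in>carrier G. (\<Sum>c\<in>carrier G. f c * g (inv c \<otimes> b)) * h (inv b \<otimes> a))"
      using a by (simp add: gm_in)
    also have "\<dots> = (\<Sum>b\<in>carrier G. \<Sum>c\<in>carrier G. f c * g (inv c \<otimes> b) * h (inv b \<otimes> a))"
      by (simp add: sum_distrib_right)
    also have "\<dots> = (\<Sum>c\<in>carrier G. \<Sum>b\<in>carrier G. f c * g (inv c \<otimes> b) * h (inv b \<otimes> a))"
      by (rule sum.swap)
    also have "\<dots> = (\<Sum>c\<in>carrier G. f c * (\<Sum>b\<in>carrier G. g (inv c \<otimes> b) * h (inv b \<otimes> a)))"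
      by (simp add: sum_distrib_left mult.assoc)
    also have "\<dots> = (\<Sum>c\<in>carrier G. f c * gm g h (inv c \<otimes> a))"
    proof (rule sum.cong[OF refl])
      fix c assume c: "c \<in> carrier G"
      have "(\<Sum>b\<in>carrier G. g (inv c \<otimes> b) * h (inv b \<otimes> a))
          = (\<Sum>d\<in>carrier G. g (inv c \<otimes> (c \<otimes> d)) * h (inv (c \<otimes> d) \<otimes> a))"
        by (rule reindex_l[OF c])
      also have "\<dots> = (\<Sum>d\<in>carrier G. g d * h (inv d \<otimes> (inv c \<otimes> a)))"
        using c a by (intro sum.cong) (simp_all add: m_assoc inv_mult_group)
      also have "\<dots> = gm g h (inv c \<otimes> a)" using c a by (simp add: gm_in)
      finally show "f c * (\<Sum>b\<in>carrier G. g (inv c \<otimes> b) * h (inv b \<otimes> a)) = f c * gm g h (inv c \<otimes> a)"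
        by simp
    qed
    also have "\<dots> = gm f (gm g h) a" using a by (simp add: gm_in)
    finally show ?thesis .
  qed
qed

lemma gm_add_l: "gm (\<lambda>g. f1 g + f2 g) h = (\<lambda>a. gm f1 h a + gm f2 h a)"
  by (rule ext) (simp add: ga_mult_def distrib_right sum.distrib)

lemma gm_diff_r: "gm f (\<lambda>g. h1 g - h2 g) = (\<lambda>a. gm f h1 a - gm f h2 a)"
  by (rule ext) (simp add: ga_mult_def right_diff_distrib sum_subtractf)

lemma gm_diff_l: "gm (\<lambda>g. f1 g - f2 g) h = (\<lambda>a. gm f1 h a - gm f2 h a)"
  by (rule ext) (simp add: ga_mult_def left_diff_distrib sum_subtractf)

lemma gm_basis_r: "c \<in> carrier G \<Longrightarrow> gm f (ga_basis c) = (\<lambda>a. if a \<in> carrier G then f (a \<otimes> inv c) else 0)"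
proof (rule ext)
  fix a assume c: "c \<in> carrier G"
  show "gm f (ga_basis c) a = (if a \<in> carrier G then f (a \<otimes> inv c) else 0)"
  proof (cases "a \<in> carrier G")
    case False then show ?thesis by (simp add: gm_out)
  next
    case a: True
    have "gm f (ga_basis c) a = (\<Sum>b\<in>carrier G. if b = a \<otimes> inv c then f b else 0)"
      unfolding gm_in[OF a]
    proof (rule sum.cong[OF refl])
      fix b assume b: "b \<in> carrier G"
      have "(inv b \<otimes> a = c) = (b = a \<otimes> inv c)"
        using a b c by (metis inv_closed inv_inv inv_mult_group inv_solve_left inv_solve_right m_closed)
      thus "f b * ga_basis c (inv b \<otimes> a) = (if b = a \<otimes> inv c then f b else 0)"
        by (simp add: ga_basis_def)
    qed
    also have "\<dots> = f (a \<otimes> inv c)" using a c by (simp add: sum.delta'[OF fin] sum.delta[OF fin])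
    finally show ?thesis using a by simp
  qed
qed

lemma gm_basis_l: "c \<in> carrier G \<Longrightarrow> gm (ga_basis c) f = (\<lambda>a. if a \<in> carrier G then f (inv c \<otimes> a) else 0)"
proof (rule ext)
  fix a assume c: "c \<in> carrier G"
  show "gm (ga_basis c) f a = (if a \<in> carrier G then f (inv c \<otimes> a) else 0)"
  proof (cases "a \<in> carrier G")
    case False then show ?thesis by (simp add: gm_out)
  next
    case a: True
    have "gm (ga_basis c) f a = (\<Sum>b\<in>carrier G. if b = c then f (inv b \<otimes> a) else 0)"
      unfolding gm_in[OF a] by (rule sum.cong[OF refl]) (simp add: ga_basis_def)
    also have "\<dots> = f (inv c \<otimes> a)" using c by (simp add: sum.delta'[OF fin] sum.delta[OF fin])
    finally show ?thesis using a by simp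
  qed
qed

lemma gm_one_r: "f \<in> group_alg G \<Longrightarrow> gm f (ga_basis \<one>) = f"
  by (rule ext) (simp add: gm_basis_r ga_zero)

lemma gm_one_l: "f \<in> group_alg G \<Longrightarrow> gm (ga_basis \<one>) f = f"
  by (rule ext) (simp add: gm_basis_l ga_zero)

lemma gm_scal: "f \<in> group_alg G \<Longrightarrow> gm (\<lambda>b. k * ga_basis \<one> b) f = (\<lambda>a. k * f a)"
proof -
  assume f: "f \<in> group_alg G"
  have "gm (\<lambda>b. k * ga_basis \<one> b) f = (\<lambda>a. k * gm (ga_basis \<one>) f a)"
    by (rule ext) (simp add: ga_mult_def sum_distrib_left mult.assoc)
  thus ?thesis using gm_one_l[OF f] by simp
qed

definition cf :: "('a \<Rightarrow> 'f::field) \<Rightarrow> bool" where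
  "cf f \<longleftrightarrow> (\<forall>g\<in>carrier G. \<forall>a\<in>carrier G. f (inv g \<otimes> a \<otimes> g) = f a)"

lemma cf_central: "cf f \<Longrightarrow> gm f r = gm r f"
proof
  fix a assume cf: "cf f"
  show "gm f r a = gm r f a"
  proof (cases "a \<in> carrier G")
    case False then show ?thesis by (simp add: gm_out)
  next
    case a: True
    have "gm f r a = (\<Sum>c\<in>carrier G. f (a \<otimes> inv c) * r (inv (a \<otimes> inv c) \<otimes> a))"
      unfolding gm_in[OF a] by (rule reindex_inv[OF a])
    also have "\<dots> = (\<Sum>c\<in>carrier G. r c * f (inv c \<otimes> a))"
    proof (rule sum.cong[OF refl])
      fix c assume c: "c \<in> carrier G"
      have e1: "inv (a \<otimes> inv c) \<otimes> a = c" using a c by (simp add: inv_mult_group m_assoc)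
      have "f (inv c \<otimes> (a \<otimes> inv c) \<otimes> c) = f (a \<otimes> inv c)"
        using cf a c unfolding cf_def by simp
      moreover have "inv c \<otimes> (a \<otimes> inv c) \<otimes> c = inv c \<otimes> a" using a c by (simp add: m_assoc)
      ultimately have "f (a \<otimes> inv c) = f (inv c \<otimes> a)" by simp
      thus "f (a \<otimes> inv c) * r (inv (a \<otimes> inv c) \<otimes> a) = r c * f (inv c \<otimes> a)"
        using e1 by simp
    qed
    also have "\<dots> = gm r f a" using a by (simp add: gm_in)
    finally show ?thesis .
  qed
qed

lemma central_cf: "(\<And>c. c \<in> carrier G \<Longrightarrow> gm f (ga_basis c) = gm (ga_basis c) f) \<Longrightarrow> cf f"
  unfolding cf_def
proof (intro ballI)
  fix g a assume h: "\<And>c. c \<in> carrier G \<Longrightarrow> gm f (ga_basis c) = gm (ga_basis c) f"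
    and g: "g \<in> carrier G" and a: "a \<in> carrier G"
  have "gm f (ga_basis g) (a \<otimes> g) = gm (ga_basis g) f (a \<otimes> g)" using h[OF g] by simp
  hence "f (a \<otimes> g \<otimes> inv g) = f (inv g \<otimes> (a \<otimes> g))"
    using a g by (simp add: gm_basis_r gm_basis_l)
  thus "f (inv g \<otimes> a \<otimes> g) = f a" using a g by (simp add: m_assoc)
qed

end

locale tgrp = group G for G (structure) +
  fixes x y :: 'g and m :: nat and t :: int
  assumes xy: "x \<in> carrier G" "y \<in> carrier G"
    and gen: "generate G {x, y} = carrier G"
    and rel_x: "x [^] m = \<one>"
    and rel_y: "y [^] (3::nat) = \<one>"
    and rel_conj: "inv y \<otimes> x \<otimes> y = x [^] t"
    and ordG: "order G = 3 * m"
    and t_cube: "t ^ 3 mod int m = 1 mod int m"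
    and t_gcd: "gcd (int m) (t - 1) = 1"
    and m_pos: "m > 0"
begin

lemma x_c[simp]: "x \<in> carrier G" and y_c[simp]: "y \<in> carrier G" using xy by auto

lemma pow_mod: "x [^] (a::int) = x [^] (a mod int m)"
proof -
  have "x [^] (a::int) = x [^] (int m * (a div int m) + a mod int m)" by simp
  also have "\<dots> = x [^] (int m * (a div int m)) \<otimes> x [^] (a mod int m)"
    by (rule int_pow_mult[OF x_c])
  also have "\<dots> = (x [^] int m) [^] (a div int m) \<otimes> x [^] (a mod int m)"
    by (simp add: int_pow_pow)
  also have "\<dots> = x [^] (a mod int m)" by (simp add: int_pow_int rel_x)
  finally show ?thesis .
qed

lemma pow_cong: "a mod int m = b mod int m \<Longrightarrow> x [^] (a::int) = x [^] b"
  by (metis pow_mod)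

definition conjy :: "'g \<Rightarrow> 'g" where "conjy h = inv y \<otimes> h \<otimes> y"

lemma conjy_hom: "conjy \<in> hom G G"
  unfolding hom_def conjy_def
  by (auto simp: m_assoc)
     (metis inv_closed m_assoc m_closed r_inv r_one xy(2) l_one)

lemma conj_pow: "inv y \<otimes> x [^] (i::int) \<otimes> y = x [^] (t * i)"
proof -
  have "conjy (x [^] i) = (conjy x) [^] i"
    using hom_int_pow[OF conjy_hom x_c] is_group by simp
  thus ?thesis by (simp add: conjy_def rel_conj int_pow_pow)
qed

lemma conj_pow_j: "inv (y [^] (j::nat)) \<otimes> x [^] (i::int) \<otimes> y [^] j = x [^] (t ^ j * i)"
proof (induction j arbitrary: i)
  case 0 then show ?case by simp
next
  case (Suc j)
  have "inv (y [^] Suc j) \<otimes> x [^] i \<otimes> y [^] Suc j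
      = inv y \<otimes> (inv (y [^] j) \<otimes> x [^] i \<otimes> y [^] j) \<otimes> y"
    by (simp add: inv_mult_group m_assoc)
  also have "\<dots> = x [^] (t * (t ^ j * i))" by (simp add: Suc conj_pow)
  finally show ?case by (simp add: mult.assoc)
qed

lemma swap_xy: "x [^] (i::int) \<otimes> y [^] (j::nat) = y [^] j \<otimes> x [^] (t ^ j * i)"
proof -
  have "y [^] j \<otimes> x [^] (t ^ j * i) = y [^] j \<otimes> (inv (y [^] j) \<otimes> x [^] i \<otimes> y [^] j)"
    by (simp add: conj_pow_j)
  also have "\<dots> = x [^] i \<otimes> y [^] j"
    by (simp add: m_assoc[symmetric] r_inv)
  finally show ?thesis by simp
qed

lemma inv_y: "inv y = y [^] (2::nat)"
proof (rule inv_equality)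
  show "y [^] (2::nat) \<otimes> y = \<one>" using rel_y by (simp add: numeral_3_eq_3 numeral_2_eq_2)
qed auto

lemma normal_form: "g \<in> carrier G \<Longrightarrow> \<exists>j<(3::nat). \<exists>d::int. g = y [^] j \<otimes> x [^] d"
proof -
  assume "g \<in> carrier G"
  hence "g \<in> generate G {x, y}" using gen by simp
  thus ?thesis
  proof (induction rule: generate.induct)
    case one
    then show ?case by (intro exI[of _ "0::nat"]) (auto intro!: exI[of _ "0::int"])
  next
    case (incl h)
    then show ?case
    proof
      assume "h = x" thus ?thesis by (intro exI[of _ "0::nat"]) (auto intro!: exI[of _ "1::int"])
    next
      assume "h \<in> {y}" thus ?thesis by (intro exI[of _ "1::nat"]) (auto intro!: exI[of _ "0::int"])
    qed
  next
    case (inv h)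
    then show ?case
    proof
      assume "h = x" thus ?thesis by (intro exI[of _ "0::nat"]) (auto intro!: exI[of _ "-1"] simp: int_pow_neg)
    next
      assume "h \<in> {y}" thus ?thesis by (intro exI[of _ "2::nat"]) (auto intro!: exI[of _ "0::int"] simp: inv_y)
    qed
  next
    case (eng h1 h2)
    then obtain i a j b where ij: "i < (3::nat)" "j < (3::nat)" and h: "h1 = y [^] i \<otimes> x [^] (a::int)" "h2 = y [^] j \<otimes> x [^] (b::int)"
      by blast
    have "h1 \<otimes> h2 = y [^] i \<otimes> (x [^] a \<otimes> y [^] j) \<otimes> x [^] b"
      by (simp add: h m_assoc)
    also have "\<dots> = y [^] (i + j) \<otimes> x [^] (t ^ j * a + b)"
      by (simp add: swap_xy m_assoc nat_pow_mult[symmetric] int_pow_mult)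
    finally have e: "h1 \<otimes> h2 = y [^] (i + j) \<otimes> x [^] (t ^ j * a + b)" .
    show ?case
    proof (cases "i + j < 3")
      case True then show ?thesis using e by blast
    next
      case False
      hence "y [^] (i + j) = y [^] (i + j - 3)"
        using nat_pow_mult[of y "i + j - 3" 3] rel_y by simp
      thus ?thesis using e False ij by (intro exI[of _ "i + j - 3"]) auto
    qed
  qed
qed


lemma fin: "finite (carrier G)"
  using ordG m_pos unfolding order_def by (metis card.infinite mult_is_0 not_gr0 zero_neq_numeral)

lemma card_G: "card (carrier G) = 3 * m" using ordG unfolding order_def .

definition Phi :: "nat \<times> nat \<Rightarrow> 'g" where "Phi p = y [^] (fst p) \<otimes> x [^] int (snd p)"

lemma G_Phi: "carrier G = Phi ` ({..<3} \<times> {..<m})"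
proof
  show "Phi ` ({..<3} \<times> {..<m}) \<subseteq> carrier G" by (auto simp: Phi_def)
  show "carrier G \<subseteq> Phi ` ({..<3} \<times> {..<m})"
  proof
    fix g assume "g \<in> carrier G"
    then obtain j d where j: "j < (3::nat)" and g: "g = y [^] j \<otimes> x [^] (d::int)"
      using normal_form by blast
    have "x [^] d = x [^] int (nat (d mod int m))" using pow_mod m_pos by simp
    hence "g = Phi (j, nat (d mod int m))" by (simp add: g Phi_def)
    moreover have "nat (d mod int m) < m" using m_pos by (simp add: nat_less_iff)
    ultimately show "g \<in> Phi ` ({..<3} \<times> {..<m})" using j by blast
  qed
qed

lemma Phi_inj: "inj_on Phi ({..<3} \<times> {..<m})"
proof -
  have "card (Phi ` ({..<3} \<times> {..<m})) = card ({..<3::nat} \<times> {..<m})"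
    using G_Phi[symmetric] card_G by (simp add: card_cartesian_product)
  thus ?thesis by (simp add: inj_on_iff_eq_card)
qed

lemma pow_eq_one: "x [^] (a::int) = \<one> \<Longrightarrow> int m dvd a"
proof -
  assume a: "x [^] a = \<one>"
  have "Phi (0, nat (a mod int m)) = x [^] (a mod int m)" using m_pos by (simp add: Phi_def)
  also have "\<dots> = \<one>" using a pow_mod by simp
  also have "\<one> = Phi (0, 0)" by (simp add: Phi_def)
  finally have "nat (a mod int m) = 0"
    using inj_onD[OF Phi_inj] m_pos by (force simp: nat_less_iff)
  moreover have "0 \<le> a mod int m" using m_pos by simp
  ultimately have "a mod int m = 0" by linarith
  thus ?thesis by (simp add: dvd_eq_mod_eq_0)
qed

abbreviation "H \<equiv> generate G {x}"

lemma H_eq: "H = {x [^] (i::int) | i. True}" using generate_pow[OF x_c] by simp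

lemma H_nat: "H = (\<lambda>d. x [^] int d) ` {..<m}"
proof
  show "H \<subseteq> (\<lambda>d. x [^] int d) ` {..<m}"
  proof
    fix h assume "h \<in> H"
    then obtain i where "h = x [^] (i::int)" using H_eq by auto
    hence "h = x [^] int (nat (i mod int m))" using pow_mod m_pos by simp
    moreover have "nat (i mod int m) < m" using m_pos by (simp add: nat_less_iff)
    ultimately show "h \<in> (\<lambda>d. x [^] int d) ` {..<m}" by blast
  qed
  show "(\<lambda>d. x [^] int d) ` {..<m} \<subseteq> H" using H_eq by blast
qed

lemma card_H: "card H = m"
proof -
  have "inj_on (\<lambda>d. x [^] int d) {..<m}"
  proof (rule inj_onI)
    fix a b assume "a \<in> {..<m}" "b \<in> {..<m}" "x [^] int a = x [^] int b"
    hence "Phi (0, a) = Phi (0, b)" by (simp add: Phi_def)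
    thus "a = b" using inj_onD[OF Phi_inj] \<open>a \<in> {..<m}\<close> \<open>b \<in> {..<m}\<close> by force
  qed
  thus ?thesis using H_nat by (simp add: card_image)
qed

lemma H_sub: "H \<subseteq> carrier G" using H_eq by auto
lemma one_H: "\<one> \<in> H" using H_eq by (auto intro!: exI[of _ "0::int"])
lemma H_mult: "a \<in> H \<Longrightarrow> b \<in> H \<Longrightarrow> a \<otimes> b \<in> H"
  using H_eq by (auto simp: int_pow_mult[symmetric])
lemma H_inv: "a \<in> H \<Longrightarrow> inv a \<in> H"
  using H_eq by (auto simp: int_pow_neg[symmetric])
lemma H_comm: "a \<in> H \<Longrightarrow> b \<in> H \<Longrightarrow> a \<otimes> b = b \<otimes> a"
  using H_eq by (auto simp: int_pow_mult[symmetric] add.commute)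

definition sig :: "'g \<Rightarrow> 'g" where "sig h = inv y \<otimes> h \<otimes> y"

lemma sig_pow: "sig (x [^] (i::int)) = x [^] (t * i)" by (simp add: sig_def conj_pow)

lemma sig_H: "h \<in> H \<Longrightarrow> sig h \<in> H" using H_eq sig_pow by auto

lemma sig3: "h \<in> H \<Longrightarrow> sig (sig (sig h)) = h"
proof -
  assume "h \<in> H"
  then obtain i where h: "h = x [^] (i::int)" using H_eq by auto
  have e1: "t * (t * (t * i)) = t ^ 3 * i" by (simp add: power3_eq_cube algebra_simps)
  have "(t ^ 3 * i) mod int m = ((t ^ 3 mod int m) * i) mod int m" by (rule mod_mult_left_eq[symmetric])
  also have "\<dots> = ((1 mod int m) * i) mod int m" using t_cube by simp
  also have "\<dots> = i mod int m" by (simp add: mod_mult_left_eq)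
  finally have "(t ^ 3 * i) mod int m = i mod int m" .
  hence e2: "(t * (t * (t * i))) mod int m = i mod int m" by (simp only: e1)
  have "sig (sig (sig h)) = x [^] (t * (t * (t * i)))" by (simp add: h sig_pow)
  also have "\<dots> = x [^] i" by (rule pow_cong[OF e2])
  finally show ?thesis using h by simp
qed

lemma sig_fix: "h \<in> H \<Longrightarrow> h \<noteq> \<one> \<Longrightarrow> sig h \<noteq> h"
proof
  assume "h \<in> H" "h \<noteq> \<one>" "sig h = h"
  then obtain i where h: "h = x [^] (i::int)" using H_eq by auto
  have "x [^] ((t - 1) * i) = x [^] (t * i) \<otimes> inv (x [^] i)"
    by (simp add: int_pow_diff[symmetric] algebra_simps)
  also have "\<dots> = \<one>" using \<open>sig h = h\<close> by (simp add: h sig_pow)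
  finally have "int m dvd (t - 1) * i" by (rule pow_eq_one)
  moreover have "coprime (int m) (t - 1)" using t_gcd by (simp add: coprime_iff_gcd_eq_1)
  ultimately have "int m dvd i" using coprime_dvd_mult_right_iff by blast
  hence "i mod int m = 0 mod int m" by (simp add: dvd_eq_mod_eq_0)
  hence "x [^] i = x [^] (0::int)" by (rule pow_cong)
  hence "x [^] i = \<one>" by simp
  thus False using h \<open>h \<noteq> \<one>\<close> by simp
qed

lemma sig_one: "h \<in> H \<Longrightarrow> sig h = \<one> \<Longrightarrow> h = \<one>"
proof -
  assume hH: "h \<in> H" and s: "sig h = \<one>"
  have hc: "h \<in> carrier G" using hH H_sub by auto
  have "y \<otimes> sig h \<otimes> inv y = h"
    using hc by (simp add: sig_def m_assoc, simp add: m_assoc[symmetric])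
  thus "h = \<one>" using s by simp
qed

lemma conj_orbit: "g \<in> carrier G \<Longrightarrow> h \<in> H \<Longrightarrow> inv g \<otimes> h \<otimes> g \<in> {h, sig h, sig (sig h)}"
proof -
  assume g: "g \<in> carrier G" and hH: "h \<in> H"
  then obtain j d where j: "j < (3::nat)" and gd: "g = y [^] j \<otimes> x [^] (d::int)"
    using normal_form by blast
  obtain i where h: "h = x [^] (i::int)" using H_eq hH by auto
  have "inv g \<otimes> h \<otimes> g = inv (x [^] d) \<otimes> (inv (y [^] j) \<otimes> x [^] i \<otimes> y [^] j) \<otimes> x [^] d"
    unfolding gd h by (simp add: inv_mult_group m_assoc)
  also have "\<dots> = inv (x [^] d) \<otimes> (x [^] (t ^ j * i) \<otimes> x [^] d)"
    by (simp add: conj_pow_j m_assoc)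
  also have "x [^] (t ^ j * i) \<otimes> x [^] d = x [^] d \<otimes> x [^] (t ^ j * i)"
    by (rule H_comm) (auto simp: H_eq)
  also have "inv (x [^] d) \<otimes> (x [^] d \<otimes> x [^] (t ^ j * i)) = x [^] (t ^ j * i)"
    by (simp add: m_assoc[symmetric])
  finally have e: "inv g \<otimes> h \<otimes> g = x [^] (t ^ j * i)" .
  have "j = 0 \<or> j = 1 \<or> j = 2" using j by auto
  thus ?thesis using e by (auto simp: h sig_pow power2_eq_square mult.assoc)
qed

lemma conj_H1: "g \<in> carrier G \<Longrightarrow> a \<in> H \<Longrightarrow> inv g \<otimes> a \<otimes> g \<in> H"
proof -
  assume g: "g \<in> carrier G" and a: "a \<in> H"
  have "inv g \<otimes> a \<otimes> g \<in> {a, sig a, sig (sig a)}" by (rule conj_orbit[OF g a])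
  moreover have "sig a \<in> H" "sig (sig a) \<in> H" using a sig_H by auto
  ultimately show ?thesis using a by auto
qed

lemma conj_H_iff: "g \<in> carrier G \<Longrightarrow> a \<in> carrier G \<Longrightarrow> inv g \<otimes> a \<otimes> g \<in> H \<longleftrightarrow> a \<in> H"
proof
  assume g: "g \<in> carrier G" and a: "a \<in> carrier G"
  show "a \<in> H \<Longrightarrow> inv g \<otimes> a \<otimes> g \<in> H" by (rule conj_H1[OF g])
  assume "inv g \<otimes> a \<otimes> g \<in> H"
  from conj_H1[OF inv_closed[OF g] this]
  have "inv (inv g) \<otimes> (inv g \<otimes> a \<otimes> g) \<otimes> inv g \<in> H" .
  moreover have "inv (inv g) \<otimes> (inv g \<otimes> a \<otimes> g) \<otimes> inv g = a"
    using g a by (simp add: m_assoc, simp add: m_assoc[symmetric])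
  ultimately show "a \<in> H" by simp
qed

lemma coprime_t: "j = 1 \<or> j = 2 \<Longrightarrow> coprime (1 - t ^ j) (int m)"
proof -
  assume j: "j = 1 \<or> j = 2"
  have c1: "coprime (t - 1) (int m)" using t_gcd by (simp add: coprime_iff_gcd_eq_1 gcd.commute)
  hence c1': "coprime (1 - t) (int m)"
    by (metis coprime_minus_left_iff minus_diff_eq)
  have "int m dvd t ^ 3 - 1" using t_cube by (simp add: mod_eq_dvd_iff)
  moreover have "t ^ 3 - 1 = (t - 1) * (t\<^sup>2 + t + 1)" by (simp add: algebra_simps power2_eq_square power3_eq_cube)
  ultimately have "int m dvd (t - 1) * (t\<^sup>2 + t + 1)" by simp
  hence d: "int m dvd t\<^sup>2 + t + 1" using c1
    by (metis coprime_commute coprime_dvd_mult_right_iff)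
  have c2: "coprime (1 + t) (int m)"
  proof (rule coprimeI)
    fix c assume a: "c dvd 1 + t" and b: "c dvd int m"
    have "c dvd t\<^sup>2 + t + 1" using b d dvd_trans by blast
    moreover have "c dvd t * (1 + t)" using a by simp
    ultimately have "c dvd (t\<^sup>2 + t + 1) - t * (1 + t)" using dvd_diff by blast
    moreover have "(t\<^sup>2 + t + 1) - t * (1 + t) = 1" by (simp add: algebra_simps power2_eq_square)
    ultimately show "is_unit c" by simp
  qed
  show ?thesis
  proof (cases "j = 1")
    case True then show ?thesis using c1' by simp
  next
    case False
    hence "j = 2" using j by simp
    moreover have "1 - t ^ 2 = (1 - t) * (1 + t)" by (simp add: algebra_simps power2_eq_square)
    ultimately show ?thesis using c1' c2 by simp
  qed
qed

lemma coset_conj: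
  assumes g: "g \<in> carrier G" "g \<notin> H" and h: "h \<in> H"
  shows "\<exists>c\<in>carrier G. inv c \<otimes> g \<otimes> c = g \<otimes> h"
proof -
  obtain j d where j: "j < (3::nat)" and gd: "g = y [^] j \<otimes> x [^] (d::int)"
    using normal_form g by blast
  have "j \<noteq> 0"
  proof
    assume "j = 0" hence "g = x [^] d" using gd by simp
    thus False using g H_eq by auto
  qed
  hence j12: "j = 1 \<or> j = 2" using j by auto
  obtain e where he: "h = x [^] (e::int)" using H_eq h by auto
  obtain u v where uv: "u * (1 - t ^ j) + v * int m = 1"
    using bezout_int[of "1 - t ^ j" "int m"] coprime_t[OF j12] by (auto simp: coprime_iff_gcd_eq_1)
  define f where "f = e * u"
  have "inv (x [^] f) \<otimes> g \<otimes> x [^] f = (x [^] (- f) \<otimes> y [^] j) \<otimes> (x [^] d \<otimes> x [^] f)"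
    by (simp add: gd int_pow_neg m_assoc)
  also have "\<dots> = y [^] j \<otimes> (x [^] (t ^ j * (- f)) \<otimes> x [^] (d + f))"
    by (simp add: swap_xy int_pow_mult m_assoc)
  also have "x [^] (t ^ j * (- f)) \<otimes> x [^] (d + f) = x [^] (d + e + (- e * v) * int m)"
  proof -
    have "t ^ j * (- f) + (d + f) = d + e * (u * (1 - t ^ j))" by (simp add: f_def algebra_simps)
    also have "u * (1 - t ^ j) = 1 - v * int m" using uv by simp
    also have "d + e * (1 - v * int m) = d + e + (- e * v) * int m" by (simp add: algebra_simps)
    finally have ee: "t ^ j * (- f) + (d + f) = d + e + (- e * v) * int m" .
    show ?thesis by (simp only: int_pow_mult[OF x_c, symmetric] ee)
  qed
  also have "x [^] (d + e + (- e * v) * int m) = x [^] (d + e)"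
    by (rule pow_cong, rule mod_mult_self1)
  also have "y [^] j \<otimes> x [^] (d + e) = g \<otimes> h"
    by (simp add: gd he int_pow_mult m_assoc)
  finally show ?thesis by (intro bexI[of _ "x [^] f"]) auto
qed

end

lemma sum_fun_apply: "(sum F A) a = (\<Sum>x\<in>A. F x a)"
  by (induction A rule: infinite_finite_induct) auto

interpretation fvs: vector_space "\<lambda>(c::'f::field) (f::'a \<Rightarrow> 'f) x. c * f x"
  by unfold_locales (auto simp: fun_eq_iff algebra_simps)

lemma ideal_sum:
  assumes I: "ga_ideal G I" and fin: "finite A" and F: "\<And>a. a \<in> A \<Longrightarrow> F a \<in> I"
  shows "sum F A \<in> I"
  using fin F
proof (induction A rule: finite_induct)
  case empty
  have "(\<lambda>_. 0) \<in> I" using I by (simp add: ga_ideal_def)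
  thus ?case by (simp add: zero_fun_def)
next
  case (insert a A)
  have "F a \<in> I" "sum F A \<in> I" using insert by auto
  hence "(\<lambda>g. F a g + sum F A g) \<in> I" using I by (simp add: ga_ideal_def)
  thus ?case using insert by (simp add: plus_fun_def)
qed

context tgrp
begin

sublocale galg G using fin by unfold_locales

definition Hh :: "'g \<Rightarrow> 'f::field" where "Hh a = (if a \<in> H then 1 else 0)"

definition eps :: "'g \<Rightarrow> 'f::field" where "eps a = ga_basis \<one> a - Hh a"

abbreviation gens :: "('g \<Rightarrow> 'f::field) set" where
  "gens \<equiv> {(\<lambda>g. ga_basis h g - ga_basis \<one>\<^bsub>G\<^esub> g) | h. h \<in> H}"

lemma Hh_ga: "Hh \<in> group_alg G" using H_sub by (auto simp: group_alg_def Hh_def)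

lemma basis_ga: "c \<in> carrier G \<Longrightarrow> ga_basis c \<in> group_alg G"
  by (auto simp: group_alg_def ga_basis_def)

lemma eps_ga: "eps \<in> group_alg G"
  unfolding group_alg_def eps_def ga_basis_def Hh_def using H_sub by auto

lemma cf_Hh: "cf Hh" unfolding cf_def Hh_def using conj_H_iff by simp

lemma cf_one: "cf (ga_basis \<one> :: 'g \<Rightarrow> 'f::field)"
  unfolding cf_def ga_basis_def
proof (intro ballI)
  fix g a assume g: "g \<in> carrier G" and a: "a \<in> carrier G"
  have "(inv g \<otimes> a \<otimes> g = \<one>) = (a = \<one>)"
  proof
    assume "inv g \<otimes> a \<otimes> g = \<one>"
    hence "g \<otimes> (inv g \<otimes> a \<otimes> g) \<otimes> inv g = \<one>" using g by simp
    thus "a = \<one>" using g a by (simp add: m_assoc)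
  qed (use g in simp)
  thus "(if inv g \<otimes> a \<otimes> g = \<one> then 1 else 0) = (if a = \<one> then 1 else (0::'f))" by simp
qed

lemma cf_eps: "cf eps"
  unfolding cf_def eps_def by (intro ballI) (simp add: cf_Hh[unfolded cf_def] cf_one[unfolded cf_def])

lemma three_m: "m = 3 * k + 1 \<Longrightarrow> (3::'f::field) = 0 \<Longrightarrow> (of_nat m :: 'f) = 1"
  by simp

lemma ideal_mult:
  "ga_ideal G I \<Longrightarrow> a \<in> I \<Longrightarrow> r \<in> group_alg G \<Longrightarrow> ga_mult G r a \<in> I \<and> ga_mult G a r \<in> I"
  unfolding ga_ideal_def by blast

lemma in_ideal:
  fixes f :: "'g \<Rightarrow> 'f::field"
  assumes I: "ga_ideal G I" and gI: "gens \<subseteq> I" and f: "f \<in> group_alg G"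
    and supp: "\<And>a. a \<notin> H \<Longrightarrow> f a = 0" and s: "sum f H = 0"
  shows "f \<in> I"
proof -
  define d :: "'g \<Rightarrow> 'g \<Rightarrow> 'f" where "d h = (\<lambda>g. ga_basis h g - ga_basis \<one> g)" for h
  have dga: "h \<in> H \<Longrightarrow> d h \<in> group_alg G" for h
    using H_sub basis_ga by (auto simp: group_alg_def d_def ga_basis_def)
  have "f = (\<Sum>h\<in>H. gm (\<lambda>b. f h * ga_basis \<one> b) (d h))"
  proof (rule ext)
    fix a
    have "(\<Sum>h\<in>H. gm (\<lambda>b. f h * ga_basis \<one> b) (d h)) a = (\<Sum>h\<in>H. f h * d h a)"
      by (simp add: sum_fun_apply gm_scal dga cong: sum.cong)
    also have "\<dots> = (\<Sum>h\<in>H. f h * ga_basis h a) - (\<Sum>h\<in>H. f h) * ga_basis \<one> a"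
      by (simp add: d_def right_diff_distrib sum_subtractf sum_distrib_right)
    also have "(\<Sum>h\<in>H. f h * ga_basis h a) = (\<Sum>h\<in>H. if a = h then f a else 0)"
      by (rule sum.cong) (auto simp: ga_basis_def)
    also have "\<dots> = (if a \<in> H then f a else 0)"
      by (rule sum.delta'[OF finite_subset[OF H_sub fin]])
    also have "\<dots> = f a" using supp by simp
    finally show "f a = (\<Sum>h\<in>H. gm (\<lambda>b. f h * ga_basis \<one> b) (d h)) a" using s by simp
  qed
  also have "\<dots> \<in> I"
  proof (rule ideal_sum[OF I finite_subset[OF H_sub fin]])
    fix h assume h: "h \<in> H"
    have "d h \<in> I" using gI h unfolding d_def by blast
    moreover have "(\<lambda>b. f h * ga_basis \<one> b) \<in> group_alg G"
      by (auto simp: group_alg_def ga_basis_def)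
    ultimately show "gm (\<lambda>b. f h * ga_basis \<one> b) (d h) \<in> I"
      using I unfolding ga_ideal_def by blast
  qed
  finally show ?thesis .
qed


definition Dset :: "('g \<Rightarrow> 'f::field) set" where
  "Dset = {f \<in> group_alg G. gm f Hh = (\<lambda>_. 0)}"

lemma gm_zero_l: "gm (\<lambda>_. 0) f = (\<lambda>_. 0)" by (rule ext) (simp add: ga_mult_def)
lemma gm_zero_r: "gm f (\<lambda>_. 0) = (\<lambda>_. 0)" by (rule ext) (simp add: ga_mult_def)

lemma D_ideal: "ga_ideal G (Dset :: ('g \<Rightarrow> 'f::field) set)"
proof -
  have s1: "(Dset :: ('g \<Rightarrow> 'f) set) \<subseteq> group_alg G" by (auto simp: Dset_def)
  have s2: "(\<lambda>_. 0) \<in> (Dset :: ('g \<Rightarrow> 'f) set)" by (simp add: Dset_def group_alg_def gm_zero_l)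
  have s3: "(\<lambda>g. a g + b g) \<in> Dset" if a: "a \<in> Dset" and b: "b \<in> Dset" for a b :: "'g \<Rightarrow> 'f"
    using a b by (simp add: Dset_def group_alg_def gm_add_l)
  have s4: "gm r a \<in> Dset \<and> gm a r \<in> Dset" if a: "a \<in> Dset" and r: "r \<in> group_alg G" for a r :: "'g \<Rightarrow> 'f"
  proof -
    have az: "gm a Hh = (\<lambda>_. 0)" using a by (simp add: Dset_def)
    have "gm (gm r a) Hh = (\<lambda>_. 0)" by (simp add: gm_assoc az gm_zero_r)
    moreover have "gm (gm a r) Hh = (\<lambda>_. 0)"
    proof -
      have "gm (gm a r) Hh = gm a (gm r Hh)" by (rule gm_assoc)
      also have "gm r Hh = gm Hh r" by (rule cf_central[OF cf_Hh, symmetric])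
      also have "gm a (gm Hh r) = gm (gm a Hh) r" by (rule gm_assoc[symmetric])
      finally show ?thesis by (simp add: az gm_zero_l)
    qed
    ultimately show ?thesis by (simp add: Dset_def gm_closed)
  qed
  show ?thesis unfolding ga_ideal_def using s1 s2 s3 s4 by blast
qed

lemma Hh_shift: "h \<in> H \<Longrightarrow> a \<in> carrier G \<Longrightarrow> (Hh (inv h \<otimes> a) :: 'f::field) = Hh a"
proof -
  assume h: "h \<in> H" and a: "a \<in> carrier G"
  have hc: "h \<in> carrier G" using h H_sub by auto
  have "inv h \<otimes> a \<in> H \<longleftrightarrow> a \<in> H"
  proof
    assume "inv h \<otimes> a \<in> H"
    hence "h \<otimes> (inv h \<otimes> a) \<in> H" using H_mult h by blast
    thus "a \<in> H" using hc a by simp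
  next
    assume "a \<in> H" thus "inv h \<otimes> a \<in> H" using H_mult H_inv h by blast
  qed
  thus ?thesis by (simp add: Hh_def)
qed

lemma gens_D: "(gens :: ('g \<Rightarrow> 'f::field) set) \<subseteq> Dset"
proof
  fix f :: "'g \<Rightarrow> 'f" assume "f \<in> gens"
  then obtain h where h: "h \<in> H" and f: "f = (\<lambda>g. ga_basis h g - ga_basis \<one> g)" by blast
  have hc: "h \<in> carrier G" using h H_sub by auto
  have fga: "f \<in> group_alg G" using hc by (auto simp: f group_alg_def ga_basis_def)
  have "gm f Hh = (\<lambda>a. gm (ga_basis h) Hh a - gm (ga_basis \<one>) Hh a)"
    unfolding f by (rule gm_diff_l)
  also have "\<dots> = (\<lambda>_. 0)"
  proof (rule ext)
    fix a show "gm (ga_basis h) Hh a - gm (ga_basis \<one>) Hh a = 0"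
      using hc by (cases "a \<in> carrier G")
        (simp_all add: gm_basis_l gm_one_l[OF Hh_ga] Hh_shift[OF h] ga_zero[OF Hh_ga])
  qed
  finally show "f \<in> Dset" using fga by (simp add: Dset_def)
qed

lemma Delta_D: "Delta G H \<subseteq> (Dset :: ('g \<Rightarrow> 'f::field) set)"
  unfolding Delta_def using D_ideal gens_D by blast

lemma in_Delta:
  fixes f :: "'g \<Rightarrow> 'f::field"
  assumes "f \<in> group_alg G" "\<And>a. a \<notin> H \<Longrightarrow> f a = 0" "sum f H = 0"
  shows "f \<in> Delta G H"
  unfolding Delta_def using in_ideal[OF _ _ assms] by blast

abbreviation P where "P \<equiv> H - {\<one>}"

sublocale O: orb3 "H - {\<one>}" sig
proof
  show "finite (H - {\<one>})" using finite_subset[OF H_sub fin] by simp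
  fix p assume p: "p \<in> H - {\<one>}"
  show "sig p \<in> H - {\<one>}" using p sig_H sig_one by blast
  show "sig (sig (sig p)) = p" using p sig3 by blast
  show "sig p \<noteq> p" using p sig_fix by blast
qed

lemma orb_iff: "p \<in> P \<Longrightarrow> q \<in> P \<Longrightarrow> q \<in> O.orb p \<longleftrightarrow> O.orb q = O.orb p"
  using O.orb_eq O.self_orb by metis

definition ind :: "'g set \<Rightarrow> 'g \<Rightarrow> 'f::field" where "ind Q g = (if g \<in> Q then 1 else 0)"

lemma ind_inj: "inj_on (ind :: 'g set \<Rightarrow> 'g \<Rightarrow> 'f::field) X"
proof (rule inj_onI)
  fix A B assume "A \<in> X" "B \<in> X" and e: "(ind A :: 'g \<Rightarrow> 'f) = ind B"
  show "A = B"
  proof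
    show "A \<subseteq> B" using e by (auto simp: ind_def fun_eq_iff split: if_splits)
    show "B \<subseteq> A" using e by (auto simp: ind_def fun_eq_iff split: if_splits)
  qed
qed

context
  fixes k :: nat
  assumes mk: "m = 3 * k + 1"
begin

lemma ofm: "(3::'f::field) = 0 \<Longrightarrow> (of_nat m :: 'f) = 1" using mk by simp

lemma eps_Delta: "(3::'f::field) = 0 \<Longrightarrow> (eps :: 'g \<Rightarrow> 'f) \<in> Delta G H"
proof -
  assume c3: "(3::'f) = 0"
  have fH: "finite H" using finite_subset[OF H_sub fin] .
  have s0: "\<And>a. a \<notin> H \<Longrightarrow> (eps :: 'g \<Rightarrow> 'f) a = 0"
  proof -
    fix a assume "a \<notin> H"
    hence "a \<noteq> \<one>" using one_H by blast
    thus "(eps :: 'g \<Rightarrow> 'f) a = 0" using \<open>a \<notin> H\<close> by (simp add: eps_def Hh_def ga_basis_def)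
  qed
  have e1: "sum (eps :: 'g \<Rightarrow> 'f) H = sum (ga_basis \<one>) H - sum Hh H"
    unfolding eps_def by (rule sum_subtractf)
  have "sum (ga_basis \<one> :: 'g \<Rightarrow> 'f) H = (\<Sum>a\<in>H. if a = \<one> then 1 else 0)"
    unfolding ga_basis_def ..
  also have "\<dots> = 1" using sum.delta[OF fH, of "\<one>" "\<lambda>_. (1::'f)"] one_H by simp
  finally have e2: "sum (ga_basis \<one> :: 'g \<Rightarrow> 'f) H = 1" .
  have "sum (Hh :: 'g \<Rightarrow> 'f) H = sum (\<lambda>_. 1) H" by (rule sum.cong) (simp_all add: Hh_def)
  also have "\<dots> = of_nat m" using card_H by simp
  finally have e3: "sum (Hh :: 'g \<Rightarrow> 'f) H = of_nat m" .
  have "sum (eps :: 'g \<Rightarrow> 'f) H = 0" using e1 e2 e3 ofm[OF c3] by simp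
  thus ?thesis using in_Delta[OF eps_ga s0] by blast
qed

lemma rEps_Delta:
  assumes c3: "(3::'f::field) = 0" and r: "r \<in> group_alg G"
  shows "gm r (eps :: 'g \<Rightarrow> 'f) \<in> Delta G H"
  unfolding Delta_def
proof (rule InterI)
  fix I :: "('g \<Rightarrow> 'f) set" assume "I \<in> {I. ga_ideal G I \<and> gens \<subseteq> I}"
  hence I: "ga_ideal G I" and gI: "gens \<subseteq> I" by simp_all
  have "eps \<in> I"
    by (rule InterD[OF eps_Delta[OF c3, unfolded Delta_def]]) (simp add: I gI)
  thus "gm r eps \<in> I" using ideal_mult[OF I _ r] by blast
qed

abbreviation Zc :: "('g \<Rightarrow> 'f::field) set" where "Zc \<equiv> ga_center G (Delta G H)"

lemma Z_D: "z \<in> Zc \<Longrightarrow> z \<in> group_alg G \<and> gm z Hh = (\<lambda>_. 0)"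
proof -
  assume "z \<in> Zc"
  hence "z \<in> Delta G H" by (simp add: ga_center_def)
  hence "z \<in> Dset" using Delta_D by blast
  thus ?thesis by (simp add: Dset_def)
qed

lemma Z_central:
  assumes c3: "(3::'f::field) = 0" and z: "(z :: 'g \<Rightarrow> 'f) \<in> Zc" and r: "r \<in> group_alg G"
  shows "gm z r = gm r z"
proof -
  have zga: "z \<in> group_alg G" and zH: "gm z Hh = (\<lambda>_. 0)" using Z_D[OF z] by auto
  have ze: "gm z eps = z"
  proof -
    have "gm z eps = (\<lambda>a. gm z (ga_basis \<one>) a - gm z Hh a)"
      unfolding eps_def by (rule gm_diff_r)
    thus ?thesis by (simp add: gm_one_r[OF zga] zH)
  qed
  have ec: "\<And>q. gm eps q = gm q eps" by (rule cf_central[OF cf_eps])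
  have zc: "gm z (gm r eps) = gm (gm r eps) z"
    using z rEps_Delta[OF c3 r] by (simp add: ga_center_def)
  have "gm z r = gm (gm z eps) r" by (simp add: ze)
  also have "\<dots> = gm z (gm eps r)" by (rule gm_assoc)
  also have "\<dots> = gm z (gm r eps)" using ec[of r] by (rule arg_cong)
  also have "\<dots> = gm (gm r eps) z" by (rule zc)
  also have "\<dots> = gm r (gm eps z)" by (rule gm_assoc)
  also have "\<dots> = gm r (gm z eps)" using ec[of z] by (rule arg_cong)
  also have "\<dots> = gm r z" by (simp add: ze)
  finally show ?thesis .
qed

lemma Z_cf:
  assumes c3: "(3::'f::field) = 0" and z: "(z :: 'g \<Rightarrow> 'f) \<in> Zc"
  shows "cf z"
  by (rule central_cf) (rule Z_central[OF c3 z basis_ga])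

lemma Z_offH:
  assumes c3: "(3::'f::field) = 0" and z: "(z :: 'g \<Rightarrow> 'f) \<in> Zc"
    and a: "a \<in> carrier G" and aH: "a \<notin> H"
  shows "z a = 0"
proof -
  have zH: "gm z Hh = (\<lambda>_. 0)" using Z_D[OF z] by auto
  have cfz: "cf z" by (rule Z_cf[OF c3 z])
  have fH: "finite H" using finite_subset[OF H_sub fin] .
  have "0 = gm z Hh a" using zH by simp
  also have "\<dots> = (\<Sum>c\<in>carrier G. z (a \<otimes> inv c) * Hh (inv (a \<otimes> inv c) \<otimes> a))"
    unfolding gm_in[OF a] by (rule reindex_inv[OF a])
  also have "\<dots> = (\<Sum>c\<in>carrier G. if c \<in> H then z a else 0)"
  proof (rule sum.cong[OF refl])
    fix c assume c: "c \<in> carrier G"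
    have e1: "inv (a \<otimes> inv c) \<otimes> a = c" using a c by (simp add: inv_mult_group m_assoc)
    show "z (a \<otimes> inv c) * Hh (inv (a \<otimes> inv c) \<otimes> a) = (if c \<in> H then z a else 0)"
    proof (cases "c \<in> H")
      case True
      then obtain e where e: "e \<in> carrier G" "inv e \<otimes> a \<otimes> e = a \<otimes> inv c"
        using coset_conj[OF a aH H_inv[OF True]] by blast
      have "z (inv e \<otimes> a \<otimes> e) = z a" using cfz e a unfolding cf_def by blast
      thus ?thesis using e e1 True by (simp add: Hh_def)
    next
      case False thus ?thesis using e1 by (simp add: Hh_def)
    qed
  qed
  also have "\<dots> = (\<Sum>c\<in>carrier G \<inter> H. z a)"
    by (rule sum.inter_restrict[OF fin, symmetric])
  also have "carrier G \<inter> H = H" using H_sub by auto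
  also have "(\<Sum>c\<in>H. z a) = of_nat m * z a" by (simp add: card_H)
  also have "\<dots> = z a" using ofm[OF c3] by simp
  finally show ?thesis by simp
qed

lemma z_sig:
  assumes c3: "(3::'f::field) = 0" and z: "(z :: 'g \<Rightarrow> 'f) \<in> Zc" and p: "p \<in> H"
  shows "z (sig p) = z p"
  using Z_cf[OF c3 z] p H_sub unfolding cf_def sig_def by auto

lemma Z_one:
  assumes c3: "(3::'f::field) = 0" and z: "(z :: 'g \<Rightarrow> 'f) \<in> Zc"
  shows "z \<one> = 0"
proof -
  have zH: "gm z Hh = (\<lambda>_. 0)" using Z_D[OF z] by auto
  have fH: "finite H" using finite_subset[OF H_sub fin] .
  have "0 = gm z Hh \<one>" using zH by simp
  also have "\<dots> = (\<Sum>b\<in>carrier G. z b * Hh (inv b \<otimes> \<one>))" by (simp add: gm_in)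
  also have "\<dots> = (\<Sum>b\<in>carrier G. if b \<in> H then z b else 0)"
  proof (rule sum.cong[OF refl])
    fix b assume b: "b \<in> carrier G"
    have "inv b \<in> H \<longleftrightarrow> b \<in> H" using H_inv b by (metis inv_inv)
    thus "z b * Hh (inv b \<otimes> \<one>) = (if b \<in> H then z b else 0)" using b by (simp add: Hh_def)
  qed
  also have "\<dots> = (\<Sum>b\<in>carrier G \<inter> H. z b)"
    by (rule sum.inter_restrict[OF fin, symmetric])
  also have "carrier G \<inter> H = H" using H_sub by auto
  also have "sum z H = z \<one> + sum z P" by (rule sum.remove[OF fH one_H])
  also have "sum z P = 0"
    by (rule O.sum_P) (use c3 z_sig[OF c3 z] in auto)
  finally show ?thesis by simp
qed

abbreviation Os where "Os \<equiv> O.orb ` P"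

lemma Z_span:
  assumes c3: "(3::'f::field) = 0" and z: "(z :: 'g \<Rightarrow> 'f) \<in> Zc"
  shows "z \<in> fvs.span (ind ` Os)"
proof -
  define rep where "rep Q = (SOME p. p \<in> Q)" for Q :: "'g set"
  have zga: "z \<in> group_alg G" using Z_D[OF z] by auto
  have zeq: "z = (\<Sum>Q\<in>Os. (\<lambda>x. z (rep Q) * ind Q x))"
  proof (rule ext)
    fix g
    have "(\<Sum>Q\<in>Os. (\<lambda>x. z (rep Q) * ind Q x)) g = (\<Sum>Q\<in>Os. z (rep Q) * ind Q g)"
      by (rule sum_fun_apply)
    also have "\<dots> = z g"
    proof (cases "g \<in> P")
      case True
      have "(\<Sum>Q\<in>Os. z (rep Q) * ind Q g) = (\<Sum>Q\<in>Os. if O.orb g = Q then z (rep Q) else 0)"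
      proof (rule sum.cong[OF refl])
        fix Q assume "Q \<in> Os"
        then obtain p where p: "p \<in> P" and Q: "Q = O.orb p" by blast
        have "g \<in> Q \<longleftrightarrow> O.orb g = Q" using orb_iff[OF p True] Q by simp
        thus "z (rep Q) * ind Q g = (if O.orb g = Q then z (rep Q) else 0)" by (simp add: ind_def)
      qed
      also have "\<dots> = z (rep (O.orb g))"
        using True O.finP by (simp add: sum.delta)
      also have "\<dots> = z g"
      proof -
        have "rep (O.orb g) \<in> O.orb g" unfolding rep_def by (rule someI[of "\<lambda>p. p \<in> O.orb g", OF O.self_orb])
        thus ?thesis using O.const_orb[of z, OF _ True] z_sig[OF c3 z] by blast
      qed
      finally show ?thesis .
    next
      case False
      have "(\<Sum>Q\<in>Os. z (rep Q) * ind Q g) = 0"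
      proof (rule sum.neutral, rule ballI)
        fix Q assume "Q \<in> Os"
        hence "Q \<subseteq> P" using O.orb_sub by blast
        thus "z (rep Q) * ind Q g = 0" using False by (auto simp: ind_def)
      qed
      moreover have "z g = 0"
      proof (cases "g \<in> carrier G")
        case False thus ?thesis using ga_zero[OF zga] by simp
      next
        case gc: True
        show ?thesis
        proof (cases "g \<in> H")
          case True
          hence "g = \<one>" using False by simp
          thus ?thesis using Z_one[OF c3 z] by simp
        next
          case nH: False
          show ?thesis by (rule Z_offH[OF c3 z gc nH])
        qed
      qed
      ultimately show ?thesis by simp
    qed
    finally show "z g = (\<Sum>Q\<in>Os. (\<lambda>x. z (rep Q) * ind Q x)) g" by simp
  qed
  have "(\<Sum>Q\<in>Os. (\<lambda>x. z (rep Q) * ind Q x)) \<in> fvs.span (ind ` Os)"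
  proof (rule fvs.span_sum)
    fix Q assume "Q \<in> Os"
    hence "ind Q \<in> fvs.span (ind ` Os)" by (intro fvs.span_base) blast
    thus "(\<lambda>x. z (rep Q) * ind Q x) \<in> fvs.span (ind ` Os)" by (rule fvs.span_scale)
  qed
  thus ?thesis using zeq by simp
qed

lemma ind_Z:
  assumes c3: "(3::'f::field) = 0" and Q: "Q \<in> Os"
  shows "(ind Q :: 'g \<Rightarrow> 'f) \<in> Zc"
proof -
  obtain p where p: "p \<in> P" and Qp: "Q = O.orb p" using Q by blast
  have QP: "Q \<subseteq> P" using Qp O.orb_sub p by blast
  have ga: "(ind Q :: 'g \<Rightarrow> 'f) \<in> group_alg G"
    using QP H_sub by (auto simp: group_alg_def ind_def)
  have supp: "\<And>a. a \<notin> H \<Longrightarrow> (ind Q :: 'g \<Rightarrow> 'f) a = 0" using QP by (auto simp: ind_def)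
  have fH: "finite H" using finite_subset[OF H_sub fin] .
  have "sum (ind Q :: 'g \<Rightarrow> 'f) H = (\<Sum>a\<in>H \<inter> Q. 1)"
    unfolding ind_def by (rule sum.inter_restrict[OF fH, symmetric])
  also have "H \<inter> Q = Q" using QP by auto
  also have "(\<Sum>a\<in>Q. (1::'f)) = of_nat (card Q)" by simp
  also have "card Q = 3" using Qp O.card_orb p by simp
  finally have s: "sum (ind Q :: 'g \<Rightarrow> 'f) H = 0" using c3 by simp
  have D: "(ind Q :: 'g \<Rightarrow> 'f) \<in> Delta G H" by (rule in_Delta[OF ga supp s])
  have cfQ: "cf (ind Q :: 'g \<Rightarrow> 'f)"
    unfolding cf_def
  proof (intro ballI)
    fix g a assume g: "g \<in> carrier G" and a: "a \<in> carrier G"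
    show "(ind Q :: 'g \<Rightarrow> 'f) (inv g \<otimes> a \<otimes> g) = ind Q a"
    proof (cases "a \<in> H")
      case False
      hence "inv g \<otimes> a \<otimes> g \<notin> H" using conj_H_iff[OF g a] by simp
      thus ?thesis using False QP by (auto simp: ind_def)
    next
      case aH: True
      show ?thesis
      proof (cases "a = \<one>")
        case True thus ?thesis using g by simp
      next
        case False
        hence aP: "a \<in> P" using aH by simp
        define b where "b = inv g \<otimes> a \<otimes> g"
        have bo: "b \<in> O.orb a" using conj_orbit[OF g aH] by (simp add: b_def O.orb_def)
        hence bP: "b \<in> P" using O.orb_sub[OF aP] by blast
        have "O.orb b = O.orb a" by (rule O.orb_eq[OF aP bo])
        hence "b \<in> Q \<longleftrightarrow> a \<in> Q" using orb_iff[OF p bP] orb_iff[OF p aP] Qp by simp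
        thus ?thesis by (simp add: ind_def b_def)
      qed
    qed
  qed
  show ?thesis using D cf_central[OF cfQ] by (simp add: ga_center_def)
qed

lemma indep: "fvs.independent (ind ` Os :: ('g \<Rightarrow> 'f::field) set)"
proof (rule fvs.independent_if_scalars_zero)
  show "finite (ind ` Os :: ('g \<Rightarrow> 'f) set)" using O.finP by simp
  fix f :: "('g \<Rightarrow> 'f) \<Rightarrow> 'f" and v :: "'g \<Rightarrow> 'f"
  assume s: "(\<Sum>w\<in>ind ` Os. (\<lambda>x. f w * w x)) = 0" and v: "v \<in> ind ` Os"
  then obtain p where p: "p \<in> P" and vp: "v = ind (O.orb p)" by blast
  have wp: "w p = (if w = v then 1 else 0)" if w: "w \<in> ind ` Os" for w
  proof -
    obtain q where q: "q \<in> P" and wq: "w = ind (O.orb q)" using w by blast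
    have "w = v \<longleftrightarrow> O.orb q = O.orb p"
      using ind_inj[of UNIV, THEN inj_onD] vp wq by auto
    moreover have "p \<in> O.orb q \<longleftrightarrow> O.orb p = O.orb q" by (rule orb_iff[OF q p])
    ultimately show ?thesis by (auto simp: wq ind_def)
  qed
  have "0 = (\<Sum>w\<in>ind ` Os. (\<lambda>x. f w * w x)) p" using s by simp
  also have "\<dots> = (\<Sum>w\<in>ind ` Os. f w * w p)" by (rule sum_fun_apply)
  also have "\<dots> = (\<Sum>w\<in>ind ` Os. if w = v then f w else 0)"
    by (rule sum.cong[OF refl]) (simp add: wp)
  also have "\<dots> = f v" using v O.finP by (simp add: sum.delta')
  finally show "f v = 0" by simp
qed

lemma card_B: "card (ind ` Os :: ('g \<Rightarrow> 'f::field) set) = k"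
proof -
  have "card (ind ` Os :: ('g \<Rightarrow> 'f) set) = card Os" by (rule card_image[OF ind_inj])
  moreover have "card P = 3 * card Os" by (rule O.card_P)
  moreover have "card P = m - 1" using card_H one_H finite_subset[OF H_sub fin] by simp
  ultimately show ?thesis using mk by simp
qed

lemma main_dim:
  assumes c3: "(3::'f::field) = 0"
  shows "fvs.dim (Zc :: ('g \<Rightarrow> 'f) set) = k"
proof (rule fvs.dim_unique[of "ind ` Os"])
  show "(ind ` Os :: ('g \<Rightarrow> 'f) set) \<subseteq> Zc" using ind_Z[OF c3] by blast
  show "(Zc :: ('g \<Rightarrow> 'f) set) \<subseteq> fvs.span (ind ` Os)" using Z_span[OF c3] by blast
  show "fvs.independent (ind ` Os :: ('g \<Rightarrow> 'f) set)" by (rule indep)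
  show "card (ind ` Os :: ('g \<Rightarrow> 'f) set) = k" by (rule card_B)
qed

end

end

theorem corollary3p13:
  fixes G :: "('g, 'b) monoid_scheme" and x y :: 'g and k :: nat and m :: nat and t :: int
  assumes F_finite: "finite (UNIV :: 'f::field set)"
    and F_char: "CHAR('f) = 3"
    and m_def: "m = 3 * k + 1"
    and t_cube: "t ^ 3 mod int m = 1 mod int m"
    and t_gcd: "gcd (int m) (t - 1) = 1"
    and grp: "group G"
    and xy: "x \<in> carrier G" "y \<in> carrier G"
    and gen: "generate G {x, y} = carrier G"
    and rel_x: "x [^]\<^bsub>G\<^esub> m = \<one>\<^bsub>G\<^esub>"
    and rel_y: "y [^]\<^bsub>G\<^esub> (3::nat) = \<one>\<^bsub>G\<^esub>"
    and rel_conj: "inv\<^bsub>G\<^esub> y \<otimes>\<^bsub>G\<^esub> x \<otimes>\<^bsub>G\<^esub> y = x [^]\<^bsub>G\<^esub> t"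
    and ord: "order G = 3 * m"
  shows "fdim (ga_center G (Delta G (generate G {x}) :: ('g \<Rightarrow> 'f) set)) = k"
proof -
  interpret T: tgrp G x y m t
    using grp xy gen rel_x rel_y rel_conj ord t_cube t_gcd m_def
    by (simp add: tgrp_def tgrp_axioms_def)
  have "(of_nat CHAR('f) :: 'f) = 0" by (rule of_nat_CHAR)
  hence c3: "(3::'f) = 0" using F_char by simp
  have "fvs.dim (ga_center G (Delta G (generate G {x})) :: ('g \<Rightarrow> 'f) set) = k"
    by (rule T.main_dim[OF m_def c3])
  thus ?thesis by (simp add: fdim_def)
qed

end
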